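(* Let $\Gamma$ be a finite group and let $(X,\Gamma,\alpha,\mathcal{I})$ be a voltage graph, with $\mathcal{I}=(I_v)_{v\in V_X}$, such that the derived graph $X(\Gamma,\mathcal{I})$ is connected. (1) There is an exact sequence of $\mathbb{Z}[\Gamma]$-modules \[ 0\to\mathbb{Z}\to\bigoplus_{v\in V_X}\mathbb{Z}[\Gamma/I_v]\xrightarrow{\mathcal{L}_{X,\Gamma,\mathcal{I}}}\bigoplus_{v\in V_X}\mathbb{Z}[\Gamma/I_v]\to\mathrm{Pic}(X(\Gamma,\mathcal{I}))\to0. \] Here the first map sends $1$ to the sum of all cosets in all components. (2) Let $H$ be a normal subgroup of $\Gamma$, and let $(X,\Gamma/H,\alpha_H,\mathcal{I}_H)$ be the induced voltage graph. Then the exact sequence of (1) for $(X,\Gamma,\alpha,\mathcal{I})$ and the exact sequence of (1) for $(X,\Gamma/H,\alpha_H,\mathcal{I}_H)$, namely \[ 0\to\mathbb{Z}\to\bigoplus_v\mathbb{Z}[\Gamma/I_vH]\xrightarrow{\mathcal{L}_{X,\Gamma/H,\mathcal{I}_H}}\bigoplus_v\mathbb{Z}[\Gamma/I_vH]\to\mathrm{Pic}(X(\Gamma/H,\mathcal{I}_H))\to0, \] fit into a commutative diagram with the following vertical maps: - multiplication by $\#H$ on $\mathbb{Z}$; - the map $\beta:\bigoplus_v\mathbb{Z}[\Gamma/I_v]\to\bigoplus_v\mathbb{Z}[\Gamma/I_vH]$, which is $\mathbb{Z}[\Gamma]$-linear and on the $v$-component sends $1$ to $\#(H\cap I_v)\cdot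 1$; - the natural projection $\bigoplus_v\mathbb{Z}[\Gamma/I_v]\to\bigoplus_v\mathbb{Z}[\Gamma/I_vH]$; - the surjection $\mathrm{Pic}(X(\Gamma,\mathcal{I}))\to\mathrm{Pic}(X(\Gamma/H,\mathcal{I}_H))$ induced by this projection.
   Context: Finite graphs are in Serre's formalism: vertex set $V_X$, edge set $\mathbb{E}_X$ with fixed-point-free involution $e\mapsto\bar e$, and maps $s,t$ with $s(\bar e)=t(e)$; $\mathbb{E}_{X,v}=\{e:s(e)=v\}$. For a finite connected graph $Y$, $\mathrm{Div}(Y)=\bigoplus_{w\in V_Y}\mathbb{Z}[w]$, $\mathcal{L}_Y([w])=\sum_{e\in\mathbb{E}_{Y,w}}([w]-[t(e)])$, and $\mathrm{Pic}(Y)=\mathrm{coker}\,\mathcal{L}_Y$. A voltage graph $(X,\Gamma,\alpha,\mathcal{I})$ consists of a finite graph $X$, a group $\Gamma$, a map $\alpha:\mathbb{E}_X\to\Gamma$ with $\alpha(\bar e)=\alpha(e)^{-1}$, and a family $\mathcal{I}=(I_v)_{v\in V_X}$ of subgroups of $\Gamma$. The derived graph $X(\Gamma,\mathcal{I})$ (for finite $\Gamma$) has vertex set $\coprod_v(\Gamma/I_v\times\{v\})$ and edge set $\Gamma\times\mathbb{E}_X$, with $s((\gamma,e))=(\gamma I_{s(e)},s(e))$, $t((\gamma,e))=(\gamma\alpha(e)I_{t(e)},t(e))$ and $\overline{(\gamma,e)}=(\gamma\alpha(e),\bar e)$; $\Gamma$ acts by left multiplication. For a normal subgroup $H$ with projection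 $\pi:\Gamma\to\Gamma/H$, the induced voltage graph is $(X,\Gamma/H,\pi\circ\alpha,(I_vH/H)_v)$. Let $\mathbb{Z}[\Gamma/I_v]=\mathbb{Z}[\Gamma]\otimes_{\mathbb{Z}[I_v]}\mathbb{Z}$. We identify $\mathrm{Div}(X(\Gamma,\mathcal{I}))\cong\bigoplus_{v\in V_X}\mathbb{Z}[\Gamma/I_v]$ as $\mathbb{Z}[\Gamma]$-modules via $(\gamma I_v,v)\leftrightarrow\gamma$ in the $v$-component. Then $\mathcal{L}_{X,\Gamma,\mathcal{I}}$ is the endomorphism corresponding to $\mathcal{L}_{X(\Gamma,\mathcal{I})}$ under this identification, and similarly for $\Gamma/H$, where $(\Gamma/H)/(I_vH/H)$ is identified with $\Gamma/I_vH$. *)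

theory Defs
  imports "HOL-Algebra.Coset" "HOL-Library.Function_Algebras"
begin

record ('v, 'e) sgraph =
  sverts :: "'v set"
  sedges :: "'e set"
  sbar   :: "'e \<Rightarrow> 'e"
  ssrc   :: "'e \<Rightarrow> 'v"
  stgt   :: "'e \<Rightarrow> 'v"

definition serre_graph :: "('v, 'e) sgraph \<Rightarrow> bool" where
  "serre_graph Y \<longleftrightarrow> finite (sverts Y) \<and> finite (sedges Y) \<and>
     (\<forall>e\<in>sedges Y. sbar Y e \<in> sedges Y \<and> sbar Y e \<noteq> e \<and> sbar Y (sbar Y e) = e \<and>
        ssrc Y e \<in> sverts Y \<and> stgt Y e \<in> sverts Y \<and> ssrc Y (sbar Y e) = stgt Y e)"

definition out_edges :: "('v, 'e) sgraph \<Rightarrow> 'v \<Rightarrow> 'e set" where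
  "out_edges Y w = {e \<in> sedges Y. ssrc Y e = w}"

definition edge_rel :: "('v, 'e) sgraph \<Rightarrow> ('v \<times> 'v) set" where
  "edge_rel Y = (\<lambda>e. (ssrc Y e, stgt Y e)) ` sedges Y"

definition connected_graph :: "('v, 'e) sgraph \<Rightarrow> bool" where
  "connected_graph Y \<longleftrightarrow> sverts Y \<noteq> {} \<and>
     (\<forall>u\<in>sverts Y. \<forall>w\<in>sverts Y. (u, w) \<in> (edge_rel Y)\<^sup>*)"

text \<open>Div(Y) = free abelian group on the vertices, as finitely supported integer functions
  vanishing off the vertex set.\<close>
definition divisors :: "('v, 'e) sgraph \<Rightarrow> ('v \<Rightarrow> int) set" where
  "divisors Y = {D. \<forall>w. w \<notin> sverts Y \<longrightarrow> D w = 0}"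

definition unit_div :: "'v \<Rightarrow> ('v \<Rightarrow> int)" where
  "unit_div x = (\<lambda>y. if y = x then 1 else 0)"

definition laplacian :: "('v, 'e) sgraph \<Rightarrow> ('v \<Rightarrow> int) \<Rightarrow> ('v \<Rightarrow> int)" where
  "laplacian Y D = (\<lambda>u. \<Sum>w\<in>sverts Y. D w *
       (\<Sum>e\<in>out_edges Y w. (of_bool (u = w) - of_bool (u = stgt Y e))))"

text \<open>Pic(Y) = coker of the Laplacian; elements are the cosets D + im(L).\<close>
definition pic_class :: "('v, 'e) sgraph \<Rightarrow> ('v \<Rightarrow> int) \<Rightarrow> ('v \<Rightarrow> int) set" where
  "pic_class Y D = {D' \<in> divisors Y. D' - D \<in> laplacian Y ` divisors Y}"

definition pic :: "('v, 'e) sgraph \<Rightarrow> ('v \<Rightarrow> int) set set" where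
  "pic Y = pic_class Y ` divisors Y"

text \<open>The element 1 of Z mapped to the sum of all vertices, scaled by n.\<close>
definition const_div :: "('v, 'e) sgraph \<Rightarrow> int \<Rightarrow> ('v \<Rightarrow> int)" where
  "const_div Y n = (\<lambda>x. if x \<in> sverts Y then n else 0)"

definition pushforward :: "('v, 'e) sgraph \<Rightarrow> ('v \<Rightarrow> 'w) \<Rightarrow> ('v \<Rightarrow> int) \<Rightarrow> ('w \<Rightarrow> int)" where
  "pushforward Y f D = (\<lambda>y. \<Sum>x\<in>{x \<in> sverts Y. f x = y}. D x)"

definition voltage_graph ::
  "('v, 'e) sgraph \<Rightarrow> ('g, 'b) monoid_scheme \<Rightarrow> ('e \<Rightarrow> 'g) \<Rightarrow> ('v \<Rightarrow> 'g set) \<Rightarrow> bool" where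
  "voltage_graph X G \<alpha> I \<longleftrightarrow> serre_graph X \<and> group G \<and>
     (\<forall>e\<in>sedges X. \<alpha> e \<in> carrier G \<and> \<alpha> (sbar X e) = inv\<^bsub>G\<^esub> (\<alpha> e)) \<and>
     (\<forall>v\<in>sverts X. subgroup (I v) G)"

text \<open>Vertex (gamma I_v, v) is represented as the pair (left coset, v).\<close>
definition derived_verts ::
  "('v, 'e) sgraph \<Rightarrow> ('g, 'b) monoid_scheme \<Rightarrow> ('v \<Rightarrow> 'g set) \<Rightarrow> ('g set \<times> 'v) set" where
  "derived_verts X G I = {(\<gamma> <#\<^bsub>G\<^esub> I v, v) | \<gamma> v. \<gamma> \<in> carrier G \<and> v \<in> sverts X}"

definition derived_graph ::
  "('v, 'e) sgraph \<Rightarrow> ('g, 'b) monoid_scheme \<Rightarrow> ('e \<Rightarrow> 'g) \<Rightarrow> ('v \<Rightarrow> 'g set)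
     \<Rightarrow> ('g set \<times> 'v, 'g \<times> 'e) sgraph" where
  "derived_graph X G \<alpha> I =
     \<lparr> sverts = derived_verts X G I,
       sedges = carrier G \<times> sedges X,
       sbar = (\<lambda>(\<gamma>, e). (\<gamma> \<otimes>\<^bsub>G\<^esub> \<alpha> e, sbar X e)),
       ssrc = (\<lambda>(\<gamma>, e). (\<gamma> <#\<^bsub>G\<^esub> I (ssrc X e), ssrc X e)),
       stgt = (\<lambda>(\<gamma>, e). ((\<gamma> \<otimes>\<^bsub>G\<^esub> \<alpha> e) <#\<^bsub>G\<^esub> I (stgt X e), stgt X e)) \<rparr>"

text \<open>Left-multiplication action of Gamma on Div(X(Gamma,I)) = \<Oplus>_v Z[Gamma/I_v]:
  (gamma . D)(x) = D(gamma^{-1} x).\<close>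
definition div_act ::
  "('g, 'b) monoid_scheme \<Rightarrow> ('v, 'e) sgraph \<Rightarrow> ('v \<Rightarrow> 'g set) \<Rightarrow> 'g
     \<Rightarrow> ('g set \<times> 'v \<Rightarrow> int) \<Rightarrow> ('g set \<times> 'v \<Rightarrow> int)" where
  "div_act G X I \<gamma> D =
     (\<lambda>x. if x \<in> derived_verts X G I then D (inv\<^bsub>G\<^esub> \<gamma> <#\<^bsub>G\<^esub> fst x, snd x) else 0)"

text \<open>A map from Div(X(G,I)) to Div(X(K,J)) that is additive and equivariant along the
  group map phi : G \<rightarrow> K (i.e. Z[G]-linear, K viewed as a G-module via phi).\<close>
definition zg_linear ::
  "('v, 'e) sgraph \<Rightarrow> ('g, 'b) monoid_scheme \<Rightarrow> ('v \<Rightarrow> 'g set)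
   \<Rightarrow> ('k, 'c) monoid_scheme \<Rightarrow> ('v \<Rightarrow> 'k set) \<Rightarrow> ('g \<Rightarrow> 'k)
   \<Rightarrow> (('g set \<times> 'v \<Rightarrow> int) \<Rightarrow> ('k set \<times> 'v \<Rightarrow> int)) \<Rightarrow> bool" where
  "zg_linear X G I K J \<phi> f \<longleftrightarrow>
     (\<forall>D. (\<forall>x. x \<notin> derived_verts X G I \<longrightarrow> D x = 0) \<longrightarrow>
          (\<forall>y. y \<notin> derived_verts X K J \<longrightarrow> f D y = 0)) \<and>
     (\<forall>D D'. (\<forall>x. x \<notin> derived_verts X G I \<longrightarrow> D x = 0) \<longrightarrow>
             (\<forall>x. x \<notin> derived_verts X G I \<longrightarrow> D' x = 0) \<longrightarrow> f (D + D') = f D + f D') \<and>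
     (\<forall>\<gamma>\<in>carrier G. \<forall>D. (\<forall>x. x \<notin> derived_verts X G I \<longrightarrow> D x = 0) \<longrightarrow>
          f (div_act G X I \<gamma> D) = div_act K X J (\<phi> \<gamma>) (f D))"

definition pic_exact_seq ::
  "('v, 'e) sgraph \<Rightarrow> ('g, 'b) monoid_scheme \<Rightarrow> ('e \<Rightarrow> 'g) \<Rightarrow> ('v \<Rightarrow> 'g set) \<Rightarrow> bool" where
  "pic_exact_seq X G \<alpha> I \<longleftrightarrow>
    (let Y = derived_graph X G \<alpha> I in
      \<comment> \<open>first map Z \<rightarrow> Div: Z[Gamma]-linear (Z with trivial action) and injective\<close>
      (\<forall>n. const_div Y n \<in> divisors Y) \<and>
      (\<forall>\<gamma>\<in>carrier G. \<forall>n. div_act G X I \<gamma> (const_div Y n) = const_div Y n) \<and>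
      inj (const_div Y) \<and>
      \<comment> \<open>Laplacian is Z[Gamma]-linear; exactness at the first Div\<close>
      zg_linear X G I G I id (laplacian Y) \<and>
      {D \<in> divisors Y. laplacian Y D = 0} = range (const_div Y) \<and>
      \<comment> \<open>exactness at the second Div and at Pic; Gamma-action descends to Pic\<close>
      {D \<in> divisors Y. pic_class Y D = pic_class Y 0} = laplacian Y ` divisors Y \<and>
      pic_class Y ` divisors Y = pic Y \<and>
      (\<forall>\<gamma>\<in>carrier G. \<forall>D\<in>divisors Y. \<forall>D'\<in>divisors Y.
          pic_class Y D = pic_class Y D' \<longrightarrow>
          pic_class Y (div_act G X I \<gamma> D) = pic_class Y (div_act G X I \<gamma> D')))"

text \<open>Induced voltage graph (X, Gamma/H, pi o alpha, (I_v H / H)_v);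
  pi(a) = H a (right coset) and I_v H / H = pi(I_v).\<close>
definition ind_volt :: "('g, 'b) monoid_scheme \<Rightarrow> 'g set \<Rightarrow> ('e \<Rightarrow> 'g) \<Rightarrow> ('e \<Rightarrow> 'g set)" where
  "ind_volt G H \<alpha> = (\<lambda>e. H #>\<^bsub>G\<^esub> \<alpha> e)"

definition ind_sub :: "('g, 'b) monoid_scheme \<Rightarrow> 'g set \<Rightarrow> ('v \<Rightarrow> 'g set) \<Rightarrow> ('v \<Rightarrow> 'g set set)" where
  "ind_sub G H I = (\<lambda>v. (\<lambda>a. H #>\<^bsub>G\<^esub> a) ` I v)"

text \<open>Natural map on vertices: (gamma I_v, v) \<mapsto> (pi(gamma) (I_v H/H), v) = (pi(gamma I_v), v).\<close>
definition vproj :: "('g, 'b) monoid_scheme \<Rightarrow> 'g set \<Rightarrow> ('g set \<times> 'v) \<Rightarrow> ('g set set \<times> 'v)" where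
  "vproj G H = (\<lambda>(C, v). ((\<lambda>a. H #>\<^bsub>G\<^esub> a) ` C, v))"

definition proj_div ::
  "('v, 'e) sgraph \<Rightarrow> ('g, 'b) monoid_scheme \<Rightarrow> ('e \<Rightarrow> 'g) \<Rightarrow> ('v \<Rightarrow> 'g set) \<Rightarrow> 'g set
     \<Rightarrow> ('g set \<times> 'v \<Rightarrow> int) \<Rightarrow> ('g set set \<times> 'v \<Rightarrow> int)" where
  "proj_div X G \<alpha> I H = pushforward (derived_graph X G \<alpha> I) (vproj G H)"

definition beta_div ::
  "('v, 'e) sgraph \<Rightarrow> ('g, 'b) monoid_scheme \<Rightarrow> ('e \<Rightarrow> 'g) \<Rightarrow> ('v \<Rightarrow> 'g set) \<Rightarrow> 'g set
     \<Rightarrow> ('g set \<times> 'v \<Rightarrow> int) \<Rightarrow> ('g set set \<times> 'v \<Rightarrow> int)" where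
  "beta_div X G \<alpha> I H D =
     (\<lambda>y. int (card (H \<inter> I (snd y))) * proj_div X G \<alpha> I H D y)"

definition pic_diagram ::
  "('v, 'e) sgraph \<Rightarrow> ('g, 'b) monoid_scheme \<Rightarrow> ('e \<Rightarrow> 'g) \<Rightarrow> ('v \<Rightarrow> 'g set) \<Rightarrow> 'g set \<Rightarrow> bool" where
  "pic_diagram X G \<alpha> I H \<longleftrightarrow>
    (let Y = derived_graph X G \<alpha> I;
         Q = G Mod H; \<alpha>' = ind_volt G H \<alpha>; I' = ind_sub G H I;
         Y' = derived_graph X Q \<alpha>' I';
         \<pi> = (\<lambda>\<gamma>. H #>\<^bsub>G\<^esub> \<gamma>);
         \<beta> = beta_div X G \<alpha> I H; p = proj_div X G \<alpha> I H in
      \<comment> \<open>the vertical maps beta and p are Z[Gamma]-linear\<close>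
      zg_linear X G I Q I' \<pi> \<beta> \<and>
      zg_linear X G I Q I' \<pi> p \<and>
      \<comment> \<open>beta sends 1 of the v-component to #(H \<inter> I_v) \<cdot> 1\<close>
      (\<forall>v\<in>sverts X. \<beta> (unit_div (I v, v)) = (\<lambda>y. int (card (H \<inter> I v)) * unit_div (I' v, v) y)) \<and>
      \<comment> \<open>left square: multiplication by #H on Z\<close>
      (\<forall>n. \<beta> (const_div Y n) = const_div Y' (int (card H) * n)) \<and>
      \<comment> \<open>middle square\<close>
      (\<forall>D\<in>divisors Y. p (laplacian Y D) = laplacian Y' (\<beta> D)) \<and>
      \<comment> \<open>right square: the map on Pic induced by p, which is surjective\<close>
      (\<exists>f. (\<forall>D\<in>divisors Y. f (pic_class Y D) = pic_class Y' (p D)) \<and> f ` pic Y = pic Y'))"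

end

theory Submission imports Defs begin

lemma lap_edge_form:
  assumes "serre_graph Y"
  shows "laplacian Y D u = (\<Sum>e\<in>sedges Y. D (ssrc Y e) * (of_bool (u = ssrc Y e) - of_bool (u = stgt Y e)))"
proof -
  have fin: "finite (sverts Y)" "finite (sedges Y)" and sV: "ssrc Y ` sedges Y \<subseteq> sverts Y"
    using assms unfolding serre_graph_def by auto
  have "laplacian Y D u = (\<Sum>w\<in>sverts Y. \<Sum>e\<in>{e\<in>sedges Y. ssrc Y e = w}.
          D (ssrc Y e) * (of_bool (u = ssrc Y e) - of_bool (u = stgt Y e)))"
    unfolding laplacian_def out_edges_def
    by (auto simp: sum_distrib_left intro!: sum.cong)
  also have "\<dots> = (\<Sum>e\<in>sedges Y. D (ssrc Y e) * (of_bool (u = ssrc Y e) - of_bool (u = stgt Y e)))"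
    by (rule sum.group[OF fin(2) fin(1) sV])
  finally show ?thesis .
qed

lemma lap_out_form:
  assumes "serre_graph Y"
  shows "laplacian Y D u = (\<Sum>e\<in>out_edges Y u. D u - D (stgt Y e))"
proof -
  have fin: "finite (sedges Y)" using assms unfolding serre_graph_def by auto
  let ?b = "sbar Y"
  have bij: "bij_betw ?b (sedges Y) (sedges Y)"
  proof (rule bij_betw_byWitness[where f'="sbar Y"])
  qed (use assms in \<open>auto simp: serre_graph_def\<close>)
  have tb: "stgt Y (?b e) = ssrc Y e" if "e \<in> sedges Y" for e
    using assms that unfolding serre_graph_def by metis
  have sb: "ssrc Y (?b e) = stgt Y e" if "e \<in> sedges Y" for e
    using assms that unfolding serre_graph_def by metis
  have "(\<Sum>e\<in>sedges Y. D (ssrc Y e) * of_bool (u = stgt Y e))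
       = (\<Sum>e\<in>sedges Y. D (ssrc Y (?b e)) * of_bool (u = stgt Y (?b e)))"
    using sum.reindex_bij_betw[OF bij, of "\<lambda>e. D (ssrc Y e) * of_bool (u = stgt Y e)"] by simp
  also have "\<dots> = (\<Sum>e\<in>sedges Y. D (stgt Y e) * of_bool (u = ssrc Y e))"
    by (rule sum.cong) (auto simp: tb sb)
  finally have 1: "(\<Sum>e\<in>sedges Y. D (ssrc Y e) * of_bool (u = stgt Y e)) = \<dots>" .
  have "laplacian Y D u = (\<Sum>e\<in>sedges Y. D (ssrc Y e) * of_bool (u = ssrc Y e))
        - (\<Sum>e\<in>sedges Y. D (ssrc Y e) * of_bool (u = stgt Y e))"
    by (simp add: lap_edge_form[OF assms] right_diff_distrib sum_subtractf)
  also have "\<dots> = (\<Sum>e\<in>sedges Y. if ssrc Y e = u then D u - D (stgt Y e) else 0)"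
    unfolding 1 sum_subtractf[symmetric] by (rule sum.cong) auto
  also have "\<dots> = (\<Sum>e\<in>out_edges Y u. D u - D (stgt Y e))"
    unfolding out_edges_def by (simp add: sum.inter_filter[OF fin])
  finally show ?thesis .
qed
lemma sg_fin: "serre_graph Y \<Longrightarrow> finite (sverts Y)" "serre_graph Y \<Longrightarrow> finite (sedges Y)"
  unfolding serre_graph_def by auto

lemma sg_edge:
  assumes "serre_graph Y" "e \<in> sedges Y"
  shows "sbar Y e \<in> sedges Y" "sbar Y e \<noteq> e" "sbar Y (sbar Y e) = e" "ssrc Y e \<in> sverts Y"
    "stgt Y e \<in> sverts Y" "ssrc Y (sbar Y e) = stgt Y e"
  using assms unfolding serre_graph_def by blast+

lemma lap_add: "laplacian Y (D + D') = laplacian Y D + laplacian Y D'"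
  unfolding laplacian_def by (auto simp: distrib_right sum.distrib)

lemma lap_diff: "laplacian Y (D - D') = laplacian Y D - laplacian Y D'"
  unfolding laplacian_def by (auto simp: left_diff_distrib sum_subtractf)

lemma lap_zero: "laplacian Y 0 = 0"
  unfolding laplacian_def by auto

lemma out_edges_empty:
  assumes "serre_graph Y" "u \<notin> sverts Y" shows "out_edges Y u = {}"
  using assms unfolding serre_graph_def out_edges_def by auto

lemma lap_div: assumes "serre_graph Y" shows "laplacian Y D \<in> divisors Y"
  unfolding divisors_def using lap_out_form[OF assms] out_edges_empty[OF assms] by auto

lemma lap_const: assumes "serre_graph Y" shows "laplacian Y (const_div Y n) = 0"
proof
  fix u
  show "laplacian Y (const_div Y n) u = 0 u"
  proof (cases "u \<in> sverts Y")
    case True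
    have "stgt Y e \<in> sverts Y" if "e \<in> out_edges Y u" for e
      using assms that unfolding serre_graph_def out_edges_def by auto
    then show ?thesis using True by (simp add: lap_out_form[OF assms] const_div_def)
  qed (simp add: lap_out_form[OF assms] out_edges_empty[OF assms])
qed

lemma lap_kernel:
  assumes sg: "serre_graph Y" and con: "connected_graph Y" and D: "D \<in> divisors Y"
    and L: "laplacian Y D = 0"
  shows "D \<in> range (const_div Y)"
proof -
  have fin: "finite (sverts Y)" and ne: "sverts Y \<noteq> {}"
    using sg_fin[OF sg] con unfolding connected_graph_def by auto
  define M where "M = Max (D ` sverts Y)"
  have le: "D w \<le> M" if "w \<in> sverts Y" for w
    unfolding M_def using fin that by auto
  obtain m where m: "m \<in> sverts Y" "D m = M"
  proof -
    have "M \<in> D ` sverts Y" unfolding M_def using fin ne by (intro Max_in) auto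
    then show ?thesis using that by blast
  qed
  have tV: "stgt Y e \<in> sverts Y" if "e \<in> sedges Y" for e
    using sg_edge[OF sg that] by simp
  have stepL: "D w' = M" if a1: "(w, w') \<in> edge_rel Y" and a2: "D w = M" for w w'
  proof -
    obtain e where e: "e \<in> sedges Y" "ssrc Y e = w" "stgt Y e = w'"
      using a1 unfolding edge_rel_def by blast
    have finO: "finite (out_edges Y w)" using sg_fin[OF sg] unfolding out_edges_def by auto
    have "0 = laplacian Y D w" using L by simp
    also have "\<dots> = (\<Sum>e\<in>out_edges Y w. M - D (stgt Y e))"
      by (simp add: lap_out_form[OF sg] a2)
    finally have S0: "(\<Sum>e\<in>out_edges Y w. M - D (stgt Y e)) = 0" by simp
    have NN: "\<And>e. e \<in> out_edges Y w \<Longrightarrow> 0 \<le> M - D (stgt Y e)"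
      using le tV unfolding out_edges_def by auto
    have "\<forall>e\<in>out_edges Y w. M - D (stgt Y e) = 0"
      using sum_nonneg_eq_0_iff[OF finO NN] S0 by simp
    moreover have "e \<in> out_edges Y w" using e unfolding out_edges_def by auto
    ultimately show ?thesis using e by auto
  qed
  have reach: "D w = M" if "(m, w) \<in> (edge_rel Y)\<^sup>*" for w
    using that
  proof (induction rule: rtrancl_induct)
    case base then show ?case using m by simp
  next
    case (step y z) then show ?case using stepL by blast
  qed
  have "D = const_div Y M"
  proof
    fix x show "D x = const_div Y M x"
    proof (cases "x \<in> sverts Y")
      case True
      then have "(m, x) \<in> (edge_rel Y)\<^sup>*" using con m(1) unfolding connected_graph_def by blast
      then show ?thesis using reach True unfolding const_div_def by simp
    next
      case False
      then show ?thesis using D unfolding divisors_def const_div_def by auto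
    qed
  qed
  then show ?thesis by auto
qed

lemma div_add: "D \<in> divisors Y \<Longrightarrow> D' \<in> divisors Y \<Longrightarrow> D + D' \<in> divisors Y"
  and div_diff: "D \<in> divisors Y \<Longrightarrow> D' \<in> divisors Y \<Longrightarrow> D - D' \<in> divisors Y"
  and div_zero: "0 \<in> divisors Y"
  unfolding divisors_def by auto

lemma pic_class_self: "D \<in> divisors Y \<Longrightarrow> D \<in> pic_class Y D"
  unfolding pic_class_def using div_zero lap_zero[of Y]
  by (auto intro!: image_eqI[where x=0])

lemma pic_class_eq_iff:
  assumes sg: "serre_graph Y" and D: "D \<in> divisors Y" and D': "D' \<in> divisors Y"
  shows "pic_class Y D = pic_class Y D' \<longleftrightarrow> D - D' \<in> laplacian Y ` divisors Y"
proof
  assume "pic_class Y D = pic_class Y D'"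
  moreover have "D \<in> pic_class Y D" using pic_class_self[OF D] .
  ultimately show "D - D' \<in> laplacian Y ` divisors Y" unfolding pic_class_def by auto
next
  assume a: "D - D' \<in> laplacian Y ` divisors Y"
  then obtain E where E: "E \<in> divisors Y" "D - D' = laplacian Y E" by auto
  show "pic_class Y D = pic_class Y D'"
  proof (rule subset_antisym; rule subsetI)
    fix F
    {
      assume "F \<in> pic_class Y D"
      then obtain E' where "F \<in> divisors Y" "E' \<in> divisors Y" and q: "F - D = laplacian Y E'"
        unfolding pic_class_def by auto
      moreover have "F - D' = laplacian Y (E' + E)"
      proof -
        have "F - D' = (F - D) + (D - D')" by simp
        also have "\<dots> = laplacian Y (E' + E)" by (simp only: q E(2) lap_add)
        finally show ?thesis .
      qed
      ultimately show "F \<in> pic_class Y D'" unfolding pic_class_def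
        using div_add[of E' Y E] E(1) rev_image_eqI[of "E' + E" "divisors Y" "F - D'" "laplacian Y"]
        by simp
    }
    {
      assume "F \<in> pic_class Y D'"
      then obtain E' where "F \<in> divisors Y" "E' \<in> divisors Y" and q: "F - D' = laplacian Y E'"
        unfolding pic_class_def by auto
      moreover have "F - D = laplacian Y (E' - E)"
      proof -
        have "F - D = (F - D') - (D - D')" by simp
        also have "\<dots> = laplacian Y (E' - E)" by (simp only: q E(2) lap_diff)
        finally show ?thesis .
      qed
      ultimately show "F \<in> pic_class Y D" unfolding pic_class_def
        using div_diff[of E' Y E] E(1) rev_image_eqI[of "E' - E" "divisors Y" "F - D" "laplacian Y"]
        by simp
    }
  qed
qed
locale vgraph = group G for G :: "('g, 'b) monoid_scheme" (structure) +
  fixes X :: "('v, 'e) sgraph" and \<alpha> :: "'e \<Rightarrow> 'g" and I :: "'v \<Rightarrow> 'g set"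
  assumes sgX: "serre_graph X"
    and alpha_carr: "e \<in> sedges X \<Longrightarrow> \<alpha> e \<in> carrier G"
    and alpha_bar: "e \<in> sedges X \<Longrightarrow> \<alpha> (sbar X e) = inv (\<alpha> e)"
    and subI: "v \<in> sverts X \<Longrightarrow> subgroup (I v) G"
    and finG: "finite (carrier G)"

lemma vgraphI:
  assumes "voltage_graph X G \<alpha> I" "finite (carrier G)"
  shows "vgraph G X \<alpha> I"
  using assms unfolding voltage_graph_def vgraph_def vgraph_axioms_def by blast

context vgraph
begin

abbreviation "Y \<equiv> derived_graph X G \<alpha> I"
abbreviation "V \<equiv> derived_verts X G I"

lemma IsubG: "v \<in> sverts X \<Longrightarrow> I v \<subseteq> carrier G"
  using subI subgroup.subset by blast

lemma Y_simps:
  "sverts Y = V" "sedges Y = carrier G \<times> sedges X"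
  "ssrc Y (g, e) = (g <# I (ssrc X e), ssrc X e)"
  "stgt Y (g, e) = ((g \<otimes> \<alpha> e) <# I (stgt X e), stgt X e)"
  "sbar Y (g, e) = (g \<otimes> \<alpha> e, sbar X e)"
  unfolding derived_graph_def by simp_all

lemma V_iff: "x \<in> V \<longleftrightarrow> (\<exists>g v. x = (g <# I v, v) \<and> g \<in> carrier G \<and> v \<in> sverts X)"
  unfolding derived_verts_def by blast

lemma V_I: "g \<in> carrier G \<Longrightarrow> v \<in> sverts X \<Longrightarrow> (g <# I v, v) \<in> V"
  unfolding derived_verts_def by blast

lemma V_E:
  assumes "x \<in> V"
  obtains g v where "x = (g <# I v, v)" "g \<in> carrier G" "v \<in> sverts X"
  using assms unfolding derived_verts_def by blast

lemma V_eq_image: "V = (\<lambda>(g, v). (g <# I v, v)) ` (carrier G \<times> sverts X)"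
  unfolding derived_verts_def by auto

lemma finV: "finite V"
  unfolding V_eq_image using finG sg_fin(1)[OF sgX] by simp

lemma sgY: "serre_graph Y"
proof -
  have fE: "finite (sedges Y)" using finG sg_fin(2)[OF sgX] by (simp add: Y_simps)
  have "\<forall>x\<in>sedges Y. sbar Y x \<in> sedges Y \<and> sbar Y x \<noteq> x \<and> sbar Y (sbar Y x) = x \<and>
        ssrc Y x \<in> sverts Y \<and> stgt Y x \<in> sverts Y \<and> ssrc Y (sbar Y x) = stgt Y x"
  proof
    fix x assume "x \<in> sedges Y"
    then obtain g e where x: "x = (g, e)" "g \<in> carrier G" "e \<in> sedges X" by (auto simp: Y_simps)
    note ex = sg_edge[OF sgX x(3)]
    have a: "\<alpha> e \<in> carrier G" using alpha_carr x(3) .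
    have bb: "g \<otimes> \<alpha> e \<otimes> \<alpha> (sbar X e) = g"
      using a x(2) alpha_bar[OF x(3)] by (simp add: m_assoc)
    show "sbar Y x \<in> sedges Y \<and> sbar Y x \<noteq> x \<and> sbar Y (sbar Y x) = x \<and>
        ssrc Y x \<in> sverts Y \<and> stgt Y x \<in> sverts Y \<and> ssrc Y (sbar Y x) = stgt Y x"
      using ex a x bb by (simp add: Y_simps V_I)
  qed
  then show ?thesis unfolding serre_graph_def using finV fE by (simp add: Y_simps)
qed

definition act :: "'g \<Rightarrow> 'g set \<times> 'v \<Rightarrow> 'g set \<times> 'v" where
  "act g x = (g <# fst x, snd x)"

lemma act_V: "g \<in> carrier G \<Longrightarrow> x \<in> V \<Longrightarrow> act g x \<in> V"
  by (auto elim!: V_E simp: act_def lcos_m_assoc IsubG intro!: V_I)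

lemma act_act: "g \<in> carrier G \<Longrightarrow> h \<in> carrier G \<Longrightarrow> x \<in> V \<Longrightarrow> act g (act h x) = act (g \<otimes> h) x"
  by (auto elim!: V_E simp: act_def lcos_m_assoc IsubG m_assoc)

lemma act_one: "x \<in> V \<Longrightarrow> act \<one> x = x"
  by (auto elim!: V_E simp: act_def lcos_m_assoc IsubG)

lemma act_inj: "g \<in> carrier G \<Longrightarrow> x \<in> V \<Longrightarrow> y \<in> V \<Longrightarrow> act g x = act g y \<Longrightarrow> x = y"
  by (metis act_act act_one inv_closed l_inv)

lemma div_act_eq: "div_act G X I g D x = (if x \<in> V then D (act (inv g) x) else 0)"
  unfolding div_act_def act_def by simp

lemma act_src: "g \<in> carrier G \<Longrightarrow> d \<in> carrier G \<Longrightarrow> e \<in> sedges X \<Longrightarrow>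
    ssrc Y (g \<otimes> d, e) = act g (ssrc Y (d, e))"
  by (simp add: Y_simps act_def lcos_m_assoc IsubG sg_edge[OF sgX])

lemma act_tgt: "g \<in> carrier G \<Longrightarrow> d \<in> carrier G \<Longrightarrow> e \<in> sedges X \<Longrightarrow>
    stgt Y (g \<otimes> d, e) = act g (stgt Y (d, e))"
  by (simp add: Y_simps act_def lcos_m_assoc IsubG sg_edge[OF sgX] alpha_carr m_assoc)

lemma lap_equivariant:
  assumes g: "g \<in> carrier G"
  shows "laplacian Y (div_act G X I g D) = div_act G X I g (laplacian Y D)"
proof
  fix u
  show "laplacian Y (div_act G X I g D) u = div_act G X I g (laplacian Y D) u"
  proof (cases "u \<in> V")
    case False
    have z: "\<And>E. laplacian Y E u = 0" using lap_div[OF sgY] False unfolding divisors_def Y_simps by blast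
    then show ?thesis using False by (simp add: div_act_eq)
  next
    case True
    let ?h = "inv g"
    have h: "?h \<in> carrier G" using g by simp
    let ?m = "\<lambda>(d, e). (?h \<otimes> d, e)"
    have tV: "stgt Y x \<in> V" if "x \<in> out_edges Y u" for x
      using sg_edge(5)[OF sgY] that unfolding out_edges_def by (auto simp: Y_simps)
    have bij: "bij_betw ?m (out_edges Y u) (out_edges Y (act ?h u))"
    proof (rule bij_betw_byWitness[where f'="\<lambda>(d, e). (g \<otimes> d, e)"])
      show "\<forall>a\<in>out_edges Y u. (\<lambda>(d, e). (g \<otimes> d, e)) (?m a) = a"
        using g by (auto simp: out_edges_def Y_simps m_assoc[symmetric])
      show "\<forall>a'\<in>out_edges Y (act ?h u). ?m ((\<lambda>(d, e). (g \<otimes> d, e)) a') = a'"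
        using g by (auto simp: out_edges_def Y_simps m_assoc[symmetric])
      show "?m ` out_edges Y u \<subseteq> out_edges Y (act ?h u)"
      proof
        fix y assume "y \<in> ?m ` out_edges Y u"
        then obtain d e where de: "(d, e) \<in> out_edges Y u" "y = (?h \<otimes> d, e)" by auto
        then have d: "d \<in> carrier G" "e \<in> sedges X" "ssrc Y (d, e) = u"
          unfolding out_edges_def by (auto simp: Y_simps)
        show "y \<in> out_edges Y (act ?h u)"
          using de d h act_src[OF h d(1,2)] unfolding out_edges_def by (simp add: Y_simps)
      qed
      show "(\<lambda>(d, e). (g \<otimes> d, e)) ` out_edges Y (act ?h u) \<subseteq> out_edges Y u"
      proof
        fix y assume "y \<in> (\<lambda>(d, e). (g \<otimes> d, e)) ` out_edges Y (act ?h u)"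
        then obtain d e where de: "(d, e) \<in> out_edges Y (act ?h u)" "y = (g \<otimes> d, e)" by auto
        then have d: "d \<in> carrier G" "e \<in> sedges X" "ssrc Y (d, e) = act ?h u"
          unfolding out_edges_def by (auto simp: Y_simps)
        have "ssrc Y (g \<otimes> d, e) = act g (act ?h u)" using act_src[OF g d(1,2)] d(3) by simp
        also have "\<dots> = u" using act_act[OF g h True] act_one[OF True] g by simp
        finally show "y \<in> out_edges Y u"
          using de d g unfolding out_edges_def by (simp add: Y_simps)
      qed
    qed
    have tm: "stgt Y (?m x) = act ?h (stgt Y x)" if "x \<in> out_edges Y u" for x
      using that act_tgt[OF h] unfolding out_edges_def by (auto simp: Y_simps)
    have "laplacian Y (div_act G X I g D) u
        = (\<Sum>x\<in>out_edges Y u. D (act ?h u) - D (act ?h (stgt Y x)))"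
      using True tV by (simp add: lap_out_form[OF sgY] div_act_eq)
    also have "\<dots> = (\<Sum>x\<in>out_edges Y u. D (act ?h u) - D (stgt Y (?m x)))"
      by (rule sum.cong) (simp_all add: tm)
    also have "\<dots> = (\<Sum>x\<in>out_edges Y (act ?h u). D (act ?h u) - D (stgt Y x))"
      using sum.reindex_bij_betw[OF bij, of "\<lambda>x. D (act ?h u) - D (stgt Y x)"] by simp
    also have "\<dots> = div_act G X I g (laplacian Y D) u"
      using True by (simp add: lap_out_form[OF sgY] div_act_eq)
    finally show ?thesis .
  qed
qed

lemma div_act_div: "div_act G X I g D \<in> divisors Y"
  unfolding divisors_def by (simp add: div_act_eq Y_simps)

lemma div_act_diff: "div_act G X I g (D - D') = div_act G X I g D - div_act G X I g D'"
  by (rule ext) (simp add: div_act_eq)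

lemma div_act_add: "div_act G X I g (D + D') = div_act G X I g D + div_act G X I g D'"
  by (rule ext) (simp add: div_act_eq)

lemma part1:
  assumes con: "connected_graph Y"
  shows "pic_exact_seq X G \<alpha> I"
proof -
  have c1: "\<forall>n. const_div Y n \<in> divisors Y"
    by (simp add: const_div_def divisors_def)
  have c2: "\<forall>g\<in>carrier G. \<forall>n. div_act G X I g (const_div Y n) = const_div Y n"
    by (auto simp: div_act_eq const_div_def Y_simps act_V)
  obtain x0 where x0: "x0 \<in> V" using con unfolding connected_graph_def by (auto simp: Y_simps)
  have c3: "inj (const_div Y)"
  proof (rule injI)
    fix a b assume "const_div Y a = const_div Y b"
    then have "const_div Y a x0 = const_div Y b x0" by simp
    then show "a = b" using x0 by (simp add: const_div_def Y_simps)
  qed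
  have c4: "zg_linear X G I G I id (laplacian Y)"
    unfolding zg_linear_def
    using lap_div[OF sgY] unfolding divisors_def
    by (simp add: Y_simps lap_add lap_equivariant)
  have c5: "{D \<in> divisors Y. laplacian Y D = 0} = range (const_div Y)"
  proof
    show "{D \<in> divisors Y. laplacian Y D = 0} \<subseteq> range (const_div Y)"
      using lap_kernel[OF sgY con] by blast
    show "range (const_div Y) \<subseteq> {D \<in> divisors Y. laplacian Y D = 0}"
      using c1 lap_const[OF sgY] by auto
  qed
  have c6: "{D \<in> divisors Y. pic_class Y D = pic_class Y 0} = laplacian Y ` divisors Y"
  proof
    show "{D \<in> divisors Y. pic_class Y D = pic_class Y 0} \<subseteq> laplacian Y ` divisors Y"
    proof
      fix D assume "D \<in> {D \<in> divisors Y. pic_class Y D = pic_class Y 0}"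
      then have D: "D \<in> divisors Y" "pic_class Y D = pic_class Y 0" by auto
      then have "D - 0 \<in> laplacian Y ` divisors Y"
        using pic_class_eq_iff[OF sgY D(1) div_zero] by blast
      then show "D \<in> laplacian Y ` divisors Y" by simp
    qed
    show "laplacian Y ` divisors Y \<subseteq> {D \<in> divisors Y. pic_class Y D = pic_class Y 0}"
    proof
      fix D assume a: "D \<in> laplacian Y ` divisors Y"
      then have D: "D \<in> divisors Y" using lap_div[OF sgY] by auto
      have "pic_class Y D = pic_class Y 0"
        using pic_class_eq_iff[OF sgY D div_zero] a by simp
      then show "D \<in> {D \<in> divisors Y. pic_class Y D = pic_class Y 0}" using D by simp
    qed
  qed
  have c7: "pic_class Y ` divisors Y = pic Y" by (simp add: pic_def)
  have c8: "\<forall>g\<in>carrier G. \<forall>D\<in>divisors Y. \<forall>D'\<in>divisors Y.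
          pic_class Y D = pic_class Y D' \<longrightarrow>
          pic_class Y (div_act G X I g D) = pic_class Y (div_act G X I g D')"
  proof (intro ballI impI)
    fix g D D' assume g: "g \<in> carrier G" and D: "D \<in> divisors Y" and D': "D' \<in> divisors Y"
      and eq: "pic_class Y D = pic_class Y D'"
    obtain E where E: "E \<in> divisors Y" "D - D' = laplacian Y E"
      using pic_class_eq_iff[OF sgY D D'] eq by auto
    have "div_act G X I g D - div_act G X I g D' = laplacian Y (div_act G X I g E)"
      using E(2) by (simp add: div_act_diff[symmetric] lap_equivariant[OF g])
    then have "div_act G X I g D - div_act G X I g D' \<in> laplacian Y ` divisors Y"
      using div_act_div by (metis rev_image_eqI)
    then show "pic_class Y (div_act G X I g D) = pic_class Y (div_act G X I g D')"
      using pic_class_eq_iff[OF sgY div_act_div div_act_div] by blast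
  qed
  show ?thesis unfolding pic_exact_seq_def Let_def
    using c1 c2 c3 c4 c5 c6 c7 c8 by blast
qed

end
locale vquot = vgraph G X \<alpha> I + normal H G
  for G :: "('g, 'b) monoid_scheme" (structure) and X :: "('v, 'e) sgraph" and \<alpha> I and H

context vquot
begin

abbreviation "Q \<equiv> G Mod H"
abbreviation "pr \<equiv> (\<lambda>a. H #> a)"
abbreviation "I' \<equiv> ind_sub G H I"
abbreviation "\<alpha>' \<equiv> ind_volt G H \<alpha>"

lemma pr_carr: "a \<in> carrier G \<Longrightarrow> pr a \<in> carrier Q"
  by (simp add: carrier_FactGroup)

lemma pr_mult: "a \<in> carrier G \<Longrightarrow> b \<in> carrier G \<Longrightarrow> pr a \<otimes>\<^bsub>Q\<^esub> pr b = pr (a \<otimes> b)"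
  by (simp add: rcos_sum)

lemma pr_inv: "a \<in> carrier G \<Longrightarrow> inv\<^bsub>Q\<^esub> (pr a) = pr (inv a)"
  by (simp add: inv_FactGroup pr_carr rcos_inv)

lemma Q_carr_E:
  assumes "r \<in> carrier Q" obtains a where "a \<in> carrier G" "r = pr a"
  using assms by (auto simp: carrier_FactGroup)

lemma pr_absorb: "h \<in> H \<Longrightarrow> x \<in> carrier G \<Longrightarrow> pr (h \<otimes> x) = pr x"
  by (metis coset_mult_assoc mem_carrier rcos_const subset is_group)

lemma mem_rcos_iff: "d \<in> H #> d0 \<longleftrightarrow> d \<in> carrier G \<and> pr d = pr d0" if d0: "d0 \<in> carrier G"
proof
  assume a: "d \<in> H #> d0"
  then have "d \<in> carrier G" using r_coset_subset_G[OF subset d0] by blast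
  moreover have "pr d0 = pr d" using repr_independence[OF a d0 is_subgroup] .
  ultimately show "d \<in> carrier G \<and> pr d = pr d0" by simp
next
  assume "d \<in> carrier G \<and> pr d = pr d0"
  then show "d \<in> H #> d0" using rcos_self[OF _ is_subgroup, of d] by simp
qed

lemma l_coset_img: "d <# S = (\<lambda>a. d \<otimes> a) ` S"
  unfolding l_coset_def by auto

lemma pr_lcos:
  assumes "a \<in> carrier G" "S \<subseteq> carrier G"
  shows "l_coset Q (pr a) (pr ` S) = pr ` (a <# S)"
proof -
  have "l_coset Q (pr a) (pr ` S) = (\<lambda>s. pr a \<otimes>\<^bsub>Q\<^esub> pr s) ` S"
    unfolding l_coset_def by auto
  also have "\<dots> = (\<lambda>s. pr (a \<otimes> s)) ` S"
    using assms by (intro image_cong) (auto simp: rcos_sum)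
  also have "\<dots> = pr ` (a <# S)" by (auto simp: l_coset_img)
  finally show ?thesis .
qed

lemma Qgroup: "group Q" by (rule factorgroup_is_group)

lemma finQ: "finite (carrier Q)"
  using finG by (simp add: carrier_FactGroup)

lemma I'_eq: "I' v = pr ` I v" by (simp add: ind_sub_def)

lemma q_vgraph: "vgraph Q X \<alpha>' I'"
proof -
  interpret Q: group Q by (rule Qgroup)
  interpret h: group_hom G Q pr
    by (unfold_locales) (simp add: r_coset_hom_Mod)
  have a1: "\<alpha>' e \<in> carrier Q" if "e \<in> sedges X" for e
    using that alpha_carr pr_carr by (simp add: ind_volt_def)
  have a2: "\<alpha>' (sbar X e) = inv\<^bsub>Q\<^esub> (\<alpha>' e)" if "e \<in> sedges X" for e
    using that alpha_carr alpha_bar pr_inv by (simp add: ind_volt_def)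
  have a3: "subgroup (I' v) Q" if "v \<in> sverts X" for v
    using h.subgroup_img_is_subgroup[OF subI[OF that]] by (simp add: I'_eq)
  show ?thesis unfolding vgraph_def vgraph_axioms_def
    using Qgroup sgX a1 a2 a3 finQ by blast
qed

sublocale q: vgraph Q X \<alpha>' I' by (rule q_vgraph)

lemma vproj_simp: "vproj G H (C, v) = (pr ` C, v)"
  by (simp add: vproj_def)

lemma q_verts: "(q.act r y) = (l_coset Q r (fst y), snd y)"
  by (simp add: q.act_def)

lemma vproj_lcos: "a \<in> carrier G \<Longrightarrow> v \<in> sverts X \<Longrightarrow>
   (l_coset Q (pr a) (I' v), v) = vproj G H (a <# I v, v)"
  by (simp add: vproj_simp I'_eq pr_lcos IsubG)

lemma vproj_V: "x \<in> V \<Longrightarrow> vproj G H x \<in> q.V"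
  by (auto elim!: V_E simp: vproj_lcos[symmetric] intro!: q.V_I pr_carr)

lemma qV_E:
  assumes "y \<in> q.V"
  obtains a v where "a \<in> carrier G" "v \<in> sverts X" "y = vproj G H (a <# I v, v)"
  using assms by (auto elim!: q.V_E Q_carr_E simp: vproj_lcos)

lemma qV_eq: "q.V = vproj G H ` V"
proof
  show "q.V \<subseteq> vproj G H ` V"
    by (auto elim!: qV_E intro!: V_I)
  show "vproj G H ` V \<subseteq> q.V" using vproj_V by auto
qed

lemma vproj_act: "h \<in> carrier G \<Longrightarrow> x \<in> V \<Longrightarrow> vproj G H (act h x) = q.act (pr h) (vproj G H x)"
  by (auto elim!: V_E simp: act_def q.act_def vproj_simp pr_lcos IsubG l_coset_subset_G)

lemma phi_src: "d \<in> carrier G \<Longrightarrow> e \<in> sedges X \<Longrightarrow> ssrc q.Y (pr d, e) = vproj G H (ssrc Y (d, e))"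
  by (simp add: Y_simps q.Y_simps vproj_lcos sg_edge[OF sgX])

lemma phi_tgt: "d \<in> carrier G \<Longrightarrow> e \<in> sedges X \<Longrightarrow> stgt q.Y (pr d, e) = vproj G H (stgt Y (d, e))"
  unfolding q.Y_simps Y_simps
  by (simp add: vproj_lcos[symmetric] sg_edge[OF sgX] ind_volt_def rcos_sum alpha_carr)

lemma q_connected:
  assumes con: "connected_graph Y"
  shows "connected_graph q.Y"
proof -
  have ne: "V \<noteq> {}" using con unfolding connected_graph_def by (simp add: Y_simps)
  have edge: "(vproj G H a, vproj G H b) \<in> edge_rel q.Y" if ab: "(a, b) \<in> edge_rel Y" for a b
  proof -
    obtain x where x: "x \<in> sedges Y" "a = ssrc Y x" "b = stgt Y x"
      using ab unfolding edge_rel_def by blast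
    obtain d e where de0: "x = (d, e)" by (cases x)
    have de: "d \<in> carrier G" "e \<in> sedges X" "a = ssrc Y (d, e)" "b = stgt Y (d, e)"
      using x de0 by (simp_all add: Y_simps(2))
    have "(pr d, e) \<in> sedges q.Y" using de pr_carr by (simp add: q.Y_simps)
    then show ?thesis using de phi_src phi_tgt unfolding edge_rel_def
      by (metis (no_types, lifting) image_eqI)
  qed
  have path: "(vproj G H a, vproj G H b) \<in> (edge_rel q.Y)\<^sup>*" if "(a, b) \<in> (edge_rel Y)\<^sup>*" for a b
    using that
  proof (induction rule: rtrancl_induct)
    case base then show ?case by simp
  next
    case (step y z) then show ?case using edge by (meson rtrancl.rtrancl_into_rtrancl)
  qed
  show ?thesis unfolding connected_graph_def
  proof (intro conjI ballI)
    show "sverts q.Y \<noteq> {}" using ne by (simp add: q.Y_simps qV_eq)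
  next
    fix u w assume "u \<in> sverts q.Y" "w \<in> sverts q.Y"
    then obtain a b where "a \<in> V" "b \<in> V" "u = vproj G H a" "w = vproj G H b"
      by (auto simp: q.Y_simps qV_eq)
    then show "(u, w) \<in> (edge_rel q.Y)\<^sup>*" using con path unfolding connected_graph_def
      by (simp add: Y_simps)
  qed
qed

lemma fiber_sum:
  assumes d0: "d0 \<in> carrier G" and v: "v \<in> sverts X"
  shows "(\<Sum>d\<in>H #> d0. F (d <# I v, v))
       = int (card (H \<inter> I v)) * (\<Sum>x\<in>{x \<in> V. vproj G H x = vproj G H (d0 <# I v, v)}. F x)"
proof -
  let ?A = "H #> d0"
  let ?B = "{x \<in> V. vproj G H x = vproj G H (d0 <# I v, v)}"
  let ?g = "\<lambda>d. (d <# I v, v)"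
  interpret Iv: subgroup "I v" G using subI[OF v] .
  have Acarr: "?A \<subseteq> carrier G" using r_coset_subset_G[OF subset d0] .
  have finA: "finite ?A" using finG Acarr finite_subset by blast
  have finB: "finite ?B" using finV by simp
  have one_I: "\<one> \<in> I v" by simp
  have self_l: "d \<in> d <# I v" if "d \<in> carrier G" for d
    using that one_I unfolding l_coset_def by force
  have img1: "?g ` ?A \<subseteq> ?B"
  proof
    fix x assume "x \<in> ?g ` ?A"
    then obtain d where d: "d \<in> ?A" "x = ?g d" by blast
    then obtain h where h: "h \<in> H" "d = h \<otimes> d0" unfolding r_coset_def by blast
    have dc: "d \<in> carrier G" using d Acarr by blast
    have "pr ` (d <# I v) = pr ` (d0 <# I v)"
      unfolding l_coset_img image_image
    proof (rule image_cong[OF refl])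
      fix a assume "a \<in> I v"
      then have "a \<in> carrier G" by simp
      then show "pr (d \<otimes> a) = pr (d0 \<otimes> a)"
        using h d0 by (simp add: m_assoc pr_absorb mem_carrier)
    qed
    then show "x \<in> ?B" using d dc v by (simp add: V_I vproj_simp)
  qed
  have img2: "?B \<subseteq> ?g ` ?A"
  proof
    fix x assume x: "x \<in> ?B"
    then obtain b w where bw: "x = (b <# I w, w)" "b \<in> carrier G" "w \<in> sverts X"
      by (auto elim!: V_E)
    with x have w: "w = v" and eq: "pr ` (b <# I v) = pr ` (d0 <# I v)"
      by (auto simp: vproj_simp)
    have "pr b \<in> pr ` (b <# I v)" using self_l[OF bw(2)] by blast
    then have "pr b \<in> pr ` ((\<lambda>a. d0 \<otimes> a) ` I v)" using eq l_coset_img by metis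
    then obtain a where a: "a \<in> I v" "pr b = pr (d0 \<otimes> a)" by blast
    have ac: "a \<in> carrier G" using a by simp
    let ?d = "b \<otimes> inv a"
    have dc: "?d \<in> carrier G" using bw ac by simp
    have "pr ?d = (pr b) #> inv a" using bw ac by (simp add: coset_mult_assoc subset)
    also have "\<dots> = pr (d0 \<otimes> a \<otimes> inv a)" using a ac d0 by (simp add: coset_mult_assoc subset)
    also have "\<dots> = pr d0" using ac d0 by (simp add: m_assoc)
    finally have "?d \<in> ?A" using mem_rcos_iff[OF d0] dc by simp
    moreover have "?d \<in> b <# I v" using a unfolding l_coset_def by auto
    then have "b <# I v = ?d <# I v" using l_repr_independence[OF _ bw(2) Iv.subgroup_axioms] by blast
    ultimately show "x \<in> ?g ` ?A" using bw w by auto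
  qed
  have img: "?g ` ?A = ?B" using img1 img2 by blast
  have fib: "card {d \<in> ?A. ?g d = x} = card (H \<inter> I v)" if x: "x \<in> ?B" for x
  proof -
    obtain d1 where d1: "d1 \<in> ?A" "x = ?g d1" using x img by blast
    have d1c: "d1 \<in> carrier G" using d1 Acarr by blast
    have A1: "?A = H #> d1" using repr_independence[OF d1(1) d0 is_subgroup] .
    have "{d \<in> ?A. ?g d = x} = (\<lambda>k. d1 \<otimes> k) ` (H \<inter> I v)"
    proof
      show "{d \<in> ?A. ?g d = x} \<subseteq> (\<lambda>k. d1 \<otimes> k) ` (H \<inter> I v)"
      proof
        fix d assume "d \<in> {d \<in> ?A. ?g d = x}"
        then have d: "d \<in> H #> d1" "d <# I v = d1 <# I v" using A1 d1 by auto
        have dc: "d \<in> carrier G" using d(1) r_coset_subset_G[OF subset d1c] by blast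
        have "d \<in> d1 <# I v" using self_l[OF dc] d(2) by simp
        then obtain k where k: "k \<in> I v" "d = d1 \<otimes> k" unfolding l_coset_def by blast
        have kc: "k \<in> carrier G" using k by simp
        have "d \<in> d1 <# H" using d(1) coset_eq d1c by blast
        then obtain h' where h': "h' \<in> H" "d = d1 \<otimes> h'" unfolding l_coset_def by blast
        then have "k = h'" using k(2) kc d1c mem_carrier[OF h'(1)] by simp
        then have "k \<in> H" using h' by simp
        then show "d \<in> (\<lambda>k. d1 \<otimes> k) ` (H \<inter> I v)" using k by blast
      qed
      show "(\<lambda>k. d1 \<otimes> k) ` (H \<inter> I v) \<subseteq> {d \<in> ?A. ?g d = x}"
      proof
        fix d assume "d \<in> (\<lambda>k. d1 \<otimes> k) ` (H \<inter> I v)"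
        then obtain k where k: "k \<in> H" "k \<in> I v" "d = d1 \<otimes> k" by blast
        have kc: "k \<in> carrier G" using k by simp
        have "d \<in> d1 <# H" using k unfolding l_coset_def by blast
        then have "d \<in> H #> d1" using coset_eq d1c by blast
        moreover have "d \<in> d1 <# I v" using k unfolding l_coset_def by blast
        then have "d1 <# I v = d <# I v" using l_repr_independence[OF _ d1c Iv.subgroup_axioms] by blast
        ultimately show "d \<in> {d \<in> ?A. ?g d = x}" using A1 d1 by simp
      qed
    qed
    moreover have "inj_on (\<lambda>k. d1 \<otimes> k) (H \<inter> I v)"
      using d1c by (intro inj_onI) (auto simp: mem_carrier)
    ultimately show ?thesis by (simp add: card_image)
  qed
  have "(\<Sum>d\<in>?A. F (?g d)) = (\<Sum>x\<in>?B. \<Sum>d\<in>{d \<in> ?A. ?g d = x}. F (?g d))"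
    using sum.group[OF finA finB img1, of "\<lambda>d. F (?g d)"] by simp
  also have "\<dots> = (\<Sum>x\<in>?B. int (card (H \<inter> I v)) * F x)"
  proof (rule sum.cong[OF refl])
    fix x assume x: "x \<in> ?B"
    have "(\<Sum>d\<in>{d \<in> ?A. ?g d = x}. F (?g d)) = (\<Sum>d\<in>{d \<in> ?A. ?g d = x}. F x)"
      by (rule sum.cong) auto
    also have "\<dots> = int (card (H \<inter> I v)) * F x" using fib[OF x] by simp
    finally show "(\<Sum>d\<in>{d \<in> ?A. ?g d = x}. F (?g d)) = int (card (H \<inter> I v)) * F x" .
  qed
  also have "\<dots> = int (card (H \<inter> I v)) * (\<Sum>x\<in>?B. F x)" by (simp add: sum_distrib_left)
  finally show ?thesis .
qed

abbreviation "pp \<equiv> proj_div X G \<alpha> I H"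
abbreviation "bb \<equiv> beta_div X G \<alpha> I H"
abbreviation fb where "fb y \<equiv> {x \<in> V. vproj G H x = y}"

lemma p_eq: "pp D y = (\<Sum>x\<in>fb y. D x)"
  by (simp add: proj_div_def pushforward_def Y_simps)

lemma b_eq: "bb D y = int (card (H \<inter> I (snd y))) * pp D y"
  by (simp add: beta_div_def)

lemma fb_empty: "y \<notin> q.V \<Longrightarrow> fb y = {}"
  using vproj_V by auto

lemma p_supp: "y \<notin> q.V \<Longrightarrow> pp D y = 0"
  by (simp add: p_eq fb_empty)

lemma p_add: "pp (D + D') = pp D + pp D'"
  by (rule ext) (simp add: p_eq sum.distrib)

lemma p_diff: "pp (D - D') = pp D - pp D'"
  by (rule ext) (simp add: p_eq sum_subtractf)

lemma b_add: "bb (D + D') = bb D + bb D'"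
  by (rule ext) (simp add: b_eq p_add distrib_left)

lemma pr_one: "pr \<one> = \<one>\<^bsub>Q\<^esub>"
  by (simp add: coset_mult_one subset)

lemma p_equiv:
  assumes g: "g \<in> carrier G"
  shows "pp (div_act G X I g D) = div_act Q X I' (pr g) (pp D)"
proof
  fix y
  show "pp (div_act G X I g D) y = div_act Q X I' (pr g) (pp D) y"
  proof (cases "y \<in> q.V")
    case False then show ?thesis by (simp add: p_supp q.div_act_eq)
  next
    case True
    let ?h = "inv g"
    have h: "?h \<in> carrier G" using g by simp
    let ?z = "q.act (pr ?h) y"
    have inv': "inv\<^bsub>Q\<^esub> (pr g) = pr ?h" using pr_inv[OF g] .
    have bk: "q.act (pr g) ?z = y"
    proof -
      have "q.act (pr g) ?z = q.act (pr g \<otimes>\<^bsub>Q\<^esub> pr ?h) y"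
        using q.act_act[OF pr_carr[OF g] pr_carr[OF h] True] .
      also have "\<dots> = q.act (\<one>\<^bsub>Q\<^esub>) y" using g h by (simp add: rcos_sum coset_mult_one subset)
      also have "\<dots> = y" using q.act_one[OF True] .
      finally show ?thesis .
    qed
    have bij: "bij_betw (act ?h) (fb y) (fb ?z)"
    proof (rule bij_betw_byWitness[where f'="act g"])
      show "\<forall>a\<in>fb y. act g (act ?h a) = a"
        using g h by (auto simp: act_act act_one)
      show "\<forall>a\<in>fb ?z. act ?h (act g a) = a"
        using g h by (auto simp: act_act act_one)
      show "act ?h ` fb y \<subseteq> fb ?z"
        using h by (auto simp: act_V vproj_act)
      show "act g ` fb ?z \<subseteq> fb y"
        using g bk by (auto simp: act_V vproj_act)
    qed
    have "pp (div_act G X I g D) y = (\<Sum>x\<in>fb y. D (act ?h x))"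
      by (simp add: p_eq div_act_eq)
    also have "\<dots> = (\<Sum>x\<in>fb ?z. D x)"
      using sum.reindex_bij_betw[OF bij, of D] by simp
    also have "\<dots> = div_act Q X I' (pr g) (pp D) y"
      using True by (simp add: q.div_act_eq inv' p_eq)
    finally show ?thesis .
  qed
qed

lemma q_act_snd: "snd (q.act r y) = snd y" by (simp add: q.act_def)

lemma b_equiv:
  assumes g: "g \<in> carrier G"
  shows "bb (div_act G X I g D) = div_act Q X I' (pr g) (bb D)"
proof
  fix y
  show "bb (div_act G X I g D) y = div_act Q X I' (pr g) (bb D) y"
    unfolding b_eq p_equiv[OF g] by (simp add: q.div_act_eq q_act_snd b_eq)
qed

lemma zg_p: "zg_linear X G I Q I' pr pp"
  unfolding zg_linear_def using p_supp p_add p_equiv by blast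

lemma zg_b: "zg_linear X G I Q I' pr bb"
  unfolding zg_linear_def using p_supp b_add b_equiv by (simp add: b_eq)

lemma unit_sq:
  assumes v: "v \<in> sverts X"
  shows "bb (unit_div (I v, v)) = (\<lambda>y. int (card (H \<inter> I v)) * unit_div (I' v, v) y)"
proof
  fix y
  have oc: "\<one> \<in> carrier G" by simp
  have IV: "(I v, v) \<in> V" using V_I[OF oc v] lcos_mult_one[OF IsubG[OF v]] by simp
  have vp: "vproj G H (I v, v) = (I' v, v)" by (simp add: vproj_simp I'_eq)
  have "pp (unit_div (I v, v)) y = (\<Sum>x\<in>fb y. if x = (I v, v) then 1 else 0)"
    by (simp add: p_eq unit_div_def)
  also have "\<dots> = (if (I v, v) \<in> fb y then 1 else 0)"
    using finV by (simp add: sum.delta')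
  also have "\<dots> = unit_div (I' v, v) y"
    using IV vp by (auto simp: unit_div_def)
  finally show "bb (unit_div (I v, v)) y = int (card (H \<inter> I v)) * unit_div (I' v, v) y"
    by (auto simp: b_eq unit_div_def)
qed

lemma left_sq: "bb (const_div Y n) = const_div q.Y (int (card H) * n)"
proof
  fix y
  show "bb (const_div Y n) y = const_div q.Y (int (card H) * n) y"
  proof (cases "y \<in> q.V")
    case False then show ?thesis by (simp add: b_eq p_supp const_div_def q.Y_simps)
  next
    case True
    then obtain a v where av: "a \<in> carrier G" "v \<in> sverts X" "y = vproj G H (a <# I v, v)"
      by (rule qV_E)
    have "(\<Sum>d\<in>H #> a. const_div Y n (d <# I v, v))
        = int (card (H \<inter> I v)) * (\<Sum>x\<in>fb y. const_div Y n x)"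
      using fiber_sum[OF av(1,2)] av(3) by simp
    moreover have "(\<Sum>d\<in>H #> a. const_div Y n (d <# I v, v)) = int (card (H #> a)) * n"
    proof -
      have "d \<in> H #> a \<Longrightarrow> const_div Y n (d <# I v, v) = n" for d
        using av r_coset_subset_G[OF subset av(1)] by (auto simp: const_div_def Y_simps intro!: V_I)
      then show ?thesis by simp
    qed
    moreover have "card (H #> a) = card H"
      using card_rcosets_equal[OF rcosetsI[OF subset av(1)] subset] by simp
    ultimately have "int (card (H \<inter> I v)) * pp (const_div Y n) y = int (card H) * n"
      by (simp add: p_eq)
    moreover have "snd y = v" using av(3) by (simp add: vproj_simp)
    ultimately show ?thesis using True by (simp add: b_eq const_div_def q.Y_simps)
  qed
qed

lemma sum_ofbool_eq: "finite A \<Longrightarrow> (\<Sum>x\<in>A. of_bool (x = z) :: int) = of_bool (z \<in> A)"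
  by (simp add: of_bool_def sum.delta')

lemma mid_sq: "pp (laplacian Y D) = laplacian q.Y (bb D)"
proof
  fix y
  let ?E = "sedges Y" and ?E' = "sedges q.Y"
  let ?phi = "\<lambda>(d, e). (pr d, e)"
  let ?hh = "\<lambda>e'. of_bool (y = ssrc q.Y e') - of_bool (y = stgt q.Y e') :: int"
  have finE: "finite ?E" using sg_fin(2)[OF sgY] .
  have finE': "finite ?E'" using sg_fin(2)[OF q.sgY] .
  have finfb: "finite (fb y)" using finV by simp
  have "pp (laplacian Y D) y
      = (\<Sum>x\<in>fb y. \<Sum>e\<in>?E. D (ssrc Y e) * (of_bool (x = ssrc Y e) - of_bool (x = stgt Y e)))"
    by (simp add: p_eq lap_edge_form[OF sgY])
  also have "\<dots> = (\<Sum>e\<in>?E. \<Sum>x\<in>fb y. D (ssrc Y e) * (of_bool (x = ssrc Y e) - of_bool (x = stgt Y e)))"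
    using sum.swap[of "\<lambda>x e. D (ssrc Y e) * (of_bool (x = ssrc Y e) - of_bool (x = stgt Y e))" ?E "fb y"] .
  also have "\<dots> = (\<Sum>e\<in>?E. D (ssrc Y e) * ((\<Sum>x\<in>fb y. of_bool (x = ssrc Y e)) - (\<Sum>x\<in>fb y. of_bool (x = stgt Y e))))"
    by (simp only: sum_subtractf[symmetric] sum_distrib_left)
  also have "\<dots> = (\<Sum>e\<in>?E. D (ssrc Y e) * ?hh (?phi e))"
  proof (rule sum.cong[OF refl])
    fix x assume "x \<in> ?E"
    then obtain d e where x: "x = (d, e)" "d \<in> carrier G" "e \<in> sedges X" by (auto simp: Y_simps)
    have sV: "ssrc Y x \<in> V" and tV: "stgt Y x \<in> V" using sg_edge[OF sgY \<open>x \<in> ?E\<close>] by (simp_all add: Y_simps)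
    show "D (ssrc Y x) * ((\<Sum>xa\<in>fb y. of_bool (xa = ssrc Y x)) - (\<Sum>xa\<in>fb y. of_bool (xa = stgt Y x)))
        = D (ssrc Y x) * ?hh (?phi x)"
    proof -
      have a: "(\<Sum>xa\<in>fb y. of_bool (xa = ssrc Y x)) = (of_bool (y = ssrc q.Y (?phi x)) :: int)"
      proof -
        have "ssrc q.Y (?phi x) = vproj G H (ssrc Y x)" using x phi_src by simp
        moreover have "(ssrc Y x \<in> fb y) = (y = vproj G H (ssrc Y x))" using sV by auto
        ultimately show ?thesis using sum_ofbool_eq[OF finfb, of "ssrc Y x"] by simp
      qed
      have b: "(\<Sum>xa\<in>fb y. of_bool (xa = stgt Y x)) = (of_bool (y = stgt q.Y (?phi x)) :: int)"
      proof -
        have "stgt q.Y (?phi x) = vproj G H (stgt Y x)" using x phi_tgt by simp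
        moreover have "(stgt Y x \<in> fb y) = (y = vproj G H (stgt Y x))" using tV by auto
        ultimately show ?thesis using sum_ofbool_eq[OF finfb, of "stgt Y x"] by simp
      qed
      show ?thesis unfolding a b ..
    qed
  qed
  also have "\<dots> = (\<Sum>e'\<in>?E'. \<Sum>e\<in>{e \<in> ?E. ?phi e = e'}. D (ssrc Y e) * ?hh (?phi e))"
  proof (rule sum.group[symmetric, OF finE finE'])
    show "?phi ` ?E \<subseteq> ?E'" by (auto simp: Y_simps q.Y_simps pr_carr)
  qed
  also have "\<dots> = (\<Sum>e'\<in>?E'. bb D (ssrc q.Y e') * ?hh e')"
  proof (rule sum.cong[OF refl])
    fix e' assume "e' \<in> ?E'"
    then obtain r e0 where e': "e' = (r, e0)" "r \<in> carrier Q" "e0 \<in> sedges X" by (auto simp: q.Y_simps)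
    then obtain d0 where d0: "d0 \<in> carrier G" "r = pr d0" by (auto elim: Q_carr_E)
    let ?v = "ssrc X e0"
    have v: "?v \<in> sverts X" using sg_edge[OF sgX e'(3)] by simp
    have set: "{e \<in> ?E. ?phi e = e'} = (\<lambda>d. (d, e0)) ` (H #> d0)"
      using e' d0 by (auto simp: Y_simps mem_rcos_iff[OF d0(1)])
    have "(\<Sum>e\<in>{e \<in> ?E. ?phi e = e'}. D (ssrc Y e) * ?hh (?phi e))
        = (\<Sum>e\<in>{e \<in> ?E. ?phi e = e'}. D (ssrc Y e)) * ?hh e'"
      by (simp add: sum_distrib_right)
    also have "(\<Sum>e\<in>{e \<in> ?E. ?phi e = e'}. D (ssrc Y e)) = (\<Sum>d\<in>H #> d0. D (d <# I ?v, ?v))"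
      unfolding set by (subst sum.reindex) (auto simp: inj_on_def Y_simps)
    also have "\<dots> = int (card (H \<inter> I ?v)) * pp D (vproj G H (d0 <# I ?v, ?v))"
      using fiber_sum[OF d0(1) v] by (simp add: p_eq)
    also have "\<dots> = bb D (ssrc q.Y e')"
      using e' d0 phi_src[OF d0(1) e'(3)] by (simp add: b_eq Y_simps vproj_simp)
    finally show "(\<Sum>e\<in>{e \<in> ?E. ?phi e = e'}. D (ssrc Y e) * ?hh (?phi e)) = bb D (ssrc q.Y e') * ?hh e'" .
  qed
  also have "\<dots> = laplacian q.Y (bb D) y"
    by (simp add: lap_edge_form[OF q.sgY])
  finally show "pp (laplacian Y D) y = laplacian q.Y (bb D) y" .
qed

lemma p_div: "pp D \<in> divisors q.Y"
  unfolding divisors_def using p_supp by (simp add: q.Y_simps)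

lemma b_div: "bb D \<in> divisors q.Y"
  unfolding divisors_def using p_supp by (simp add: q.Y_simps b_eq)

lemma p_surj: "pp ` divisors Y = divisors q.Y"
proof
  show "pp ` divisors Y \<subseteq> divisors q.Y" using p_div by auto
  show "divisors q.Y \<subseteq> pp ` divisors Y"
  proof
    fix D' assume D': "D' \<in> divisors q.Y"
    define sec where "sec y = (SOME x. x \<in> V \<and> vproj G H x = y)" for y
    have sec: "sec y \<in> V \<and> vproj G H (sec y) = y" if yq: "y \<in> q.V" for y
    proof -
      obtain x where "x \<in> V" "vproj G H x = y" using yq unfolding qV_eq by blast
      then show ?thesis unfolding sec_def by (intro someI[of "\<lambda>x. x \<in> V \<and> vproj G H x = y"]) simp
    qed
    define D where "D x = (if x \<in> V \<and> x = sec (vproj G H x) then D' (vproj G H x) else 0)" for x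
    have "D \<in> divisors Y" unfolding divisors_def D_def by (simp add: Y_simps)
    moreover have "pp D = D'"
    proof
      fix y
      show "pp D y = D' y"
      proof (cases "y \<in> q.V")
        case False
        have "D' y = 0" using D' False unfolding divisors_def q.Y_simps by blast
        then show ?thesis using p_supp[OF False] by simp
      next
        case True
        have "pp D y = (\<Sum>x\<in>fb y. if x = sec y then D' y else 0)"
          unfolding p_eq by (rule sum.cong) (auto simp: D_def)
        also have "\<dots> = D' y" using sec[OF True] finV by (simp add: sum.delta')
        finally show ?thesis .
      qed
    qed
    ultimately show "D' \<in> pp ` divisors Y" by (metis image_eqI)
  qed
qed

lemma right_sq:
  "\<exists>f. (\<forall>D\<in>divisors Y. f (pic_class Y D) = pic_class q.Y (pp D)) \<and> f ` pic Y = pic q.Y"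
proof -
  define f where "f P = pic_class q.Y (pp (SOME D. D \<in> divisors Y \<and> pic_class Y D = P))" for P
  have fD: "f (pic_class Y D) = pic_class q.Y (pp D)" if D: "D \<in> divisors Y" for D
  proof -
    let ?D = "SOME D'. D' \<in> divisors Y \<and> pic_class Y D' = pic_class Y D"
    have s: "?D \<in> divisors Y \<and> pic_class Y ?D = pic_class Y D"
      using someI[of "\<lambda>D'. D' \<in> divisors Y \<and> pic_class Y D' = pic_class Y D" D] D by blast
    have "?D - D \<in> laplacian Y ` divisors Y"
      using iffD1[OF pic_class_eq_iff[OF sgY conjunct1[OF s] D]] conjunct2[OF s] by blast
    then obtain E where E: "E \<in> divisors Y" "?D - D = laplacian Y E" by blast
    have "pp ?D - pp D = pp (?D - D)" by (simp only: p_diff)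
    also have "\<dots> = pp (laplacian Y E)" by (simp only: E(2))
    also have "\<dots> = laplacian q.Y (bb E)" by (rule mid_sq)
    finally have "pp ?D - pp D = laplacian q.Y (bb E)" .
    then have "pp ?D - pp D \<in> laplacian q.Y ` divisors q.Y"
      using b_div[of E] by (rule rev_image_eqI[rotated])
    then have "pic_class q.Y (pp ?D) = pic_class q.Y (pp D)"
      by (rule iffD2[OF pic_class_eq_iff[OF q.sgY p_div p_div]])
    then show ?thesis unfolding f_def by simp
  qed
  have "f ` pic Y = (\<lambda>D. pic_class q.Y (pp D)) ` divisors Y"
    unfolding pic_def image_image using fD by (intro image_cong) auto
  also have "\<dots> = pic_class q.Y ` (pp ` divisors Y)" by (simp add: image_image)
  also have "\<dots> = pic q.Y" by (simp add: p_surj pic_def)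
  finally show ?thesis using fD by blast
qed

lemma diagram: "pic_diagram X G \<alpha> I H"
  unfolding pic_diagram_def Let_def
  using zg_p zg_b unit_sq left_sq mid_sq right_sq by blast

end

theorem proposition3p3:
  fixes X :: "('v, 'e) sgraph" and G :: "('g, 'b) monoid_scheme"
    and \<alpha> :: "'e \<Rightarrow> 'g" and I :: "'v \<Rightarrow> 'g set"
  assumes "voltage_graph X G \<alpha> I"
    and "finite (carrier G)"
    and "connected_graph (derived_graph X G \<alpha> I)"
  shows "pic_exact_seq X G \<alpha> I \<and>
         (\<forall>H. H \<lhd> G \<longrightarrow>
              pic_exact_seq X (G Mod H) (ind_volt G H \<alpha>) (ind_sub G H I) \<and>
              pic_diagram X G \<alpha> I H)"
proof -
  interpret vgraph G X \<alpha> I using vgraphI[OF assms(1,2)] .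
  have "pic_exact_seq X G \<alpha> I" using part1[OF assms(3)] .
  moreover have "pic_exact_seq X (G Mod H) (ind_volt G H \<alpha>) (ind_sub G H I) \<and> pic_diagram X G \<alpha> I H"
    if N: "H \<lhd> G" for H
  proof -
    interpret vquot G X \<alpha> I H
      by (intro vquot.intro vgraph_axioms N)
    show ?thesis using q.part1[OF q_connected[OF assms(3)]] diagram by blast
  qed
  ultimately show ?thesis by blast
qed

end
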